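(* Let $D_1\subset\mathbb{R}^2$ be an open disc centered at the origin and let $\mathbf{f}=(f_1,f_2)$ be a vector field on $\mathbb{R}^2$ with $f_1,f_2\in C^2_c(D_1)$. Let $\boldsymbol{\gamma}_1,\dots,\boldsymbol{\gamma}_m$ be distinct unit vectors in $\mathbb{R}^2$ and $c_1,\dots,c_m$ nonzero real numbers, and let $\mathcal{S}\mathbf{f}$ be the corresponding vector-valued star transform. For $\boldsymbol{\psi}\in\mathbb{S}^1\setminus(\mathcal{Z}_1\cup\mathcal{Z}_2)$ let $$Q(\boldsymbol{\psi})=\begin{bmatrix}\boldsymbol{\gamma}(\boldsymbol{\psi})\\ \boldsymbol{\gamma}(\boldsymbol{\psi})^\perp\end{bmatrix}^{-1}\in GL(2,\mathbb{R}),$$ the inverse of the $2\times 2$ matrix whose rows are $\boldsymbol{\gamma}(\boldsymbol{\psi})$ and $\boldsymbol{\gamma}(\boldsymbol{\psi})^\perp$. Then for every $\boldsymbol{\psi}\in\mathbb{S}^1\setminus(\mathcal{Z}_1\cup\mathcal{Z}_2)$ and every $s\in\mathbb{R}$, $$Q(\boldsymbol{\psi})\,\frac{d}{ds}\mathcal{R}(\mathcal{S}\mathbf{f})(\boldsymbol{\psi},s)=\mathcal{R}\mathbf{f}(\boldsymbol{\psi},s),$$ where $\mathcal{R}$ is applied componentwise to vector-valued functions.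
   Context: For $\mathbf{x}=(x_1,x_2)$ set $\mathbf{x}^\perp=(-x_2,x_1)$. For a unit vector $\boldsymbol{\gamma}$, $\mathcal{X}_{\boldsymbol{\gamma}}h(\mathbf{x})=\int_0^\infty h(\mathbf{x}+t\boldsymbol{\gamma})\,dt$ (applied componentwise to vectors). The vector-valued star transform is $\mathcal{S}\mathbf{f}=\sum_{i=1}^m c_i\,\mathcal{X}_{\boldsymbol{\gamma}_i}\begin{bmatrix}\mathbf{f}\cdot\boldsymbol{\gamma}_i\\ \mathbf{f}\cdot\boldsymbol{\gamma}_i^\perp\end{bmatrix}$, an $\mathbb{R}^2$-valued function on $\mathbb{R}^2$. $\mathcal{R}h(\boldsymbol{\psi},s)=\int_{\mathbb{R}}h(s\boldsymbol{\psi}+t\boldsymbol{\psi}^\perp)\,dt$ is the Radon transform of a scalar function $h$ over the line $\{\mathbf{x}:\mathbf{x}\cdot\boldsymbol{\psi}=s\}$, $\boldsymbol{\psi}\in\mathbb{S}^1$, $s\in\mathbb{R}$. The set of singular directions of type 1 is $\mathcal{Z}_1=\bigcup_{i=1}^m\{\boldsymbol{\psi}\in\mathbb{S}^1:\boldsymbol{\psi}\cdot\boldsymbol{\gamma}_i=0\}$. For $\boldsymbol{\psi}\in\mathbb{S}^1\setminus\mathcal{Z}_1$ define $\boldsymbol{\gamma}(\boldsymbol{\psi})=-\sum_{i=1}^m\frac{c_i\boldsymbol{\gamma}_i}{\boldsymbol{\psi}\cdot\boldsymbol{\gamma}_i}\in\mathbb{R}^2$, and the set of singular directions of type 2 is $\mathcal{Z}_2=\{\boldsymbol{\psi}\in\mathbb{S}^1\setminus\mathcal{Z}_1:\boldsymbol{\gamma}(\boldsymbol{\psi})=0\}$.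 *)

theory Defs
  imports "HOL-Analysis.Analysis"
begin

type_synonym vec2 = "real^2"

definition perp :: "vec2 \<Rightarrow> vec2" where
  "perp x = vector [- (x$2), x$1]"

definition divbeam :: "vec2 \<Rightarrow> (vec2 \<Rightarrow> real) \<Rightarrow> vec2 \<Rightarrow> real" where
  "divbeam g h x = integral {0..} (\<lambda>t. h (x + t *\<^sub>R g))"

definition divbeamV :: "vec2 \<Rightarrow> (vec2 \<Rightarrow> vec2) \<Rightarrow> vec2 \<Rightarrow> vec2" where
  "divbeamV g h x = (\<chi> k. divbeam g (\<lambda>y. h y $ k) x)"

definition star_transform ::
  "nat \<Rightarrow> (nat \<Rightarrow> real) \<Rightarrow> (nat \<Rightarrow> vec2) \<Rightarrow> (vec2 \<Rightarrow> vec2) \<Rightarrow> vec2 \<Rightarrow> vec2" where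
  "star_transform m c g f x =
     (\<Sum>i = 1..m. c i *\<^sub>R divbeamV (g i) (\<lambda>y. vector [f y \<bullet> g i, f y \<bullet> perp (g i)]) x)"

definition radon :: "(vec2 \<Rightarrow> real) \<Rightarrow> vec2 \<Rightarrow> real \<Rightarrow> real" where
  "radon h psi s = integral UNIV (\<lambda>t. h (s *\<^sub>R psi + t *\<^sub>R perp psi))"

definition radonV :: "(vec2 \<Rightarrow> vec2) \<Rightarrow> vec2 \<Rightarrow> real \<Rightarrow> vec2" where
  "radonV h psi s = (\<chi> k. radon (\<lambda>x. h x $ k) psi s)"

definition sing_dirs1 :: "nat \<Rightarrow> (nat \<Rightarrow> vec2) \<Rightarrow> vec2 set" where
  "sing_dirs1 m g = (\<Union>i\<in>{1..m}. {psi. norm psi = 1 \<and> psi \<bullet> g i = 0})"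

definition gamma_psi :: "nat \<Rightarrow> (nat \<Rightarrow> real) \<Rightarrow> (nat \<Rightarrow> vec2) \<Rightarrow> vec2 \<Rightarrow> vec2" where
  "gamma_psi m c g psi = - (\<Sum>i = 1..m. (c i / (psi \<bullet> g i)) *\<^sub>R g i)"

definition sing_dirs2 :: "nat \<Rightarrow> (nat \<Rightarrow> real) \<Rightarrow> (nat \<Rightarrow> vec2) \<Rightarrow> vec2 set" where
  "sing_dirs2 m c g = {psi. norm psi = 1 \<and> psi \<notin> sing_dirs1 m g \<and> gamma_psi m c g psi = 0}"

definition Qmat :: "nat \<Rightarrow> (nat \<Rightarrow> real) \<Rightarrow> (nat \<Rightarrow> vec2) \<Rightarrow> vec2 \<Rightarrow> real^2^2" where
  "Qmat m c g psi = matrix_inv (vector [gamma_psi m c g psi, perp (gamma_psi m c g psi)])"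

definition C2 :: "(vec2 \<Rightarrow> real) \<Rightarrow> bool" where
  "C2 h \<longleftrightarrow> (\<exists>Dh D2h.
      (\<forall>x. (h has_derivative Dh x) (at x)) \<and>
      (\<forall>x v. ((\<lambda>y. Dh y v) has_derivative D2h x v) (at x)) \<and>
      (\<forall>v w. continuous_on UNIV (\<lambda>x. D2h x v w)))"

definition C2c :: "vec2 set \<Rightarrow> (vec2 \<Rightarrow> real) \<Rightarrow> bool" where
  "C2c U h \<longleftrightarrow> C2 h \<and> compact (closure {x. h x \<noteq> 0}) \<and> closure {x. h x \<noteq> 0} \<subseteq> U"

end

theory Submission
  imports Defs
begin


lemma contH:
  fixes H :: "real \<Rightarrow> real \<Rightarrow> real"
  assumes "continuous_on UNIV (\<lambda>(u,v). H u v)" "continuous_on S p" "continuous_on S q"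
  shows "continuous_on S (\<lambda>x. H (p x) (q x))"
  using continuous_on_compose2[OF assms(1) continuous_on_Pair[OF assms(2,3)]] by auto

lemma L0:
  fixes g :: "real \<Rightarrow> real"
  assumes "continuous_on {p..q} g" "\<And>x. x \<notin> {p..q} \<Longrightarrow> g x = 0"
  shows "(g has_integral integral {p..q} g) UNIV"
  by (rule has_integral_on_superset[OF integrable_integral[OF integrable_continuous_real[OF assms(1)]]])
     (use assms(2) in auto)

lemma lemB:
  fixes H :: "real \<Rightarrow> real \<Rightarrow> real" and r a b s :: real
  assumes cont: "continuous_on UNIV (\<lambda>(u,v). H u v)"
    and supp: "\<And>u v. r \<le> \<bar>u\<bar> \<or> r \<le> \<bar>v\<bar> \<Longrightarrow> H u v = 0"
    and a: "a \<noteq> 0" and r: "r > 0"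
  shows "(\<lambda>t. integral {0..} (\<lambda>\<tau>. H (s+\<tau>*a) (t+\<tau>*b))) integrable_on UNIV"
    and "((\<lambda>s. integral UNIV (\<lambda>t. integral {0..} (\<lambda>\<tau>. H (s+\<tau>*a) (t+\<tau>*b))))
           has_real_derivative (-(1/a) * integral UNIV (\<lambda>t. H s t))) (at s)"
    and "(\<lambda>t. H s t) integrable_on UNIV"
proof -
  define R where "R u = integral {-r..r} (\<lambda>t. H u t)" for u
  have RH: "((\<lambda>t. H u t) has_integral R u) UNIV" for u
    unfolding R_def
    by (rule L0) (auto intro!: contH[OF cont] continuous_intros supp)
  have Rshift: "((\<lambda>t. H u (t + c)) has_integral R u) UNIV" for u c
  proof -
    have "((\<lambda>t. H u t) has_integral R u) {-r..r}"
      unfolding R_def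
      by (rule integrable_integral[OF integrable_continuous_real])
         (auto intro!: contH[OF cont] continuous_intros)
    then have "(((\<lambda>t. H u t) \<circ> (+) c) has_integral R u) {-r-c..r-c}"
      using has_integral_shift_Icc_real[of "\<lambda>t. H u t" c "R u" "-r-c" "r-c"] by simp
    then have "((\<lambda>t. H u (c + t)) has_integral R u) {-r-c..r-c}" by (simp add: o_def)
    then have "((\<lambda>t. H u (c + t)) has_integral R u) UNIV"
      by (rule has_integral_on_superset) (auto intro!: supp)
    then show ?thesis by (simp add: add.commute)
  qed
  have Rcont: "continuous_on UNIV R"
  proof -
    have "continuous_on UNIV (\<lambda>u. integral (cbox (-r) r) (\<lambda>t. H u t))"
      by (rule integral_continuous_on_param)
         (rule continuous_on_subset[OF cont], auto)
    then show ?thesis unfolding R_def cbox_interval .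
  qed
  have Rsupp: "R u = 0" if "r \<le> \<bar>u\<bar>" for u
  proof -
    have "H u = (\<lambda>t. 0)" using supp that by auto
    then show ?thesis unfolding R_def by simp
  qed
  show "(\<lambda>t. H s t) integrable_on UNIV" using RH by blast
  define T where "T = (r + \<bar>s\<bar> + 1) / \<bar>a\<bar>"
  define L where "L = r + T * \<bar>b\<bar>"
  have Ta: "T * \<bar>a\<bar> = r + \<bar>s\<bar> + 1" using a unfolding T_def by simp
  have T0: "T > 0" using a r unfolding T_def by (simp add: add_pos_nonneg)
  define F where "F s' = integral UNIV (\<lambda>t. integral {0..} (\<lambda>\<tau>. H (s'+\<tau>*a) (t+\<tau>*b)))" for s'
  have key: "((\<lambda>t. integral {0..} (\<lambda>\<tau>. H (s'+\<tau>*a) (t+\<tau>*b))) has_integral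
               integral {0..T} (\<lambda>\<tau>. R (s'+\<tau>*a))) UNIV" if s': "dist s' s < 1" for s'
  proof -
    have s'b: "\<bar>s'\<bar> < \<bar>s\<bar> + 1" using s' by (simp add: dist_real_def) 
    have Z1: "H (s'+\<tau>*a) (t+\<tau>*b) = 0" if "\<tau> > T" for t \<tau>
    proof (rule supp, rule disjI1)
      have "\<tau> * \<bar>a\<bar> > T * \<bar>a\<bar>" using that a by simp
      moreover have "\<bar>\<tau>*a\<bar> = \<tau> * \<bar>a\<bar>" using that T0 by (simp add: abs_mult)
      ultimately show "r \<le> \<bar>s' + \<tau>*a\<bar>" using Ta s'b by linarith
    qed
    have Z2: "H (s'+\<tau>*a) (t+\<tau>*b) = 0" if "\<bar>t\<bar> > L" "0 \<le> \<tau>" "\<tau> \<le> T" for t \<tau>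
    proof (rule supp, rule disjI2)
      have "\<tau> * \<bar>b\<bar> \<le> T * \<bar>b\<bar>" using that by (simp add: mult_right_mono)
      moreover have "\<bar>\<tau>*b\<bar> = \<tau> * \<bar>b\<bar>" using that by (simp add: abs_mult)
      ultimately show "r \<le> \<bar>t + \<tau>*b\<bar>" using that unfolding L_def by linarith
    qed
    have Kc: "continuous_on UNIV (\<lambda>(t,\<tau>). H (s'+\<tau>*a) (t+\<tau>*b))"
      unfolding case_prod_beta'
      by (rule contH[OF cont, of UNIV "\<lambda>z. s' + snd z * a" "\<lambda>z. fst z + snd z * b"])
         (auto intro!: continuous_intros)
    have Kc1: "continuous_on S (\<lambda>\<tau>. H (s'+\<tau>*a) (t+\<tau>*b))" for S t
      by (auto intro!: contH[OF cont] continuous_intros)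
    have Kc2: "continuous_on S (\<lambda>t. H (s'+\<tau>*a) (t+\<tau>*b))" for S \<tau>
      by (auto intro!: contH[OF cont] continuous_intros)
    have eq0: "integral {0..} (\<lambda>\<tau>. H (s'+\<tau>*a) (t+\<tau>*b)) = integral {0..T} (\<lambda>\<tau>. H (s'+\<tau>*a) (t+\<tau>*b))" for t
    proof -
      have "((\<lambda>\<tau>. H (s'+\<tau>*a) (t+\<tau>*b)) has_integral integral {0..T} (\<lambda>\<tau>. H (s'+\<tau>*a) (t+\<tau>*b))) {0..T}"
        by (rule integrable_integral[OF integrable_continuous_real[OF Kc1]])
      then have "((\<lambda>\<tau>. if \<tau> \<in> {0..T} then H (s'+\<tau>*a) (t+\<tau>*b) else 0) has_integral integral {0..T} (\<lambda>\<tau>. H (s'+\<tau>*a) (t+\<tau>*b))) {0..}"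
        by (subst has_integral_restrict) auto
      then have "((\<lambda>\<tau>. H (s'+\<tau>*a) (t+\<tau>*b)) has_integral integral {0..T} (\<lambda>\<tau>. H (s'+\<tau>*a) (t+\<tau>*b))) {0..}"
        by (rule has_integral_cong[THEN iffD1, rotated]) (auto simp: Z1)
      then show ?thesis by (rule integral_unique)
    qed
    define J where "J t = integral {0..T} (\<lambda>\<tau>. H (s'+\<tau>*a) (t+\<tau>*b))" for t
    have Jc: "continuous_on UNIV J"
    proof -
      have "continuous_on UNIV (\<lambda>t. integral (cbox 0 T) (\<lambda>\<tau>. H (s'+\<tau>*a) (t+\<tau>*b)))"
        by (rule integral_continuous_on_param) (rule continuous_on_subset[OF Kc], auto)
      then show ?thesis unfolding J_def cbox_interval .
    qed
    have J0: "J t = 0" if "t \<notin> {-L..L}" for t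
    proof -
      have "integral {0..T} (\<lambda>\<tau>. H (s'+\<tau>*a) (t+\<tau>*b)) = integral {0..T} (\<lambda>\<tau>. 0)"
        by (rule integral_cong) (use that in \<open>auto intro!: Z2\<close>)
      then show ?thesis unfolding J_def by simp
    qed
    have "(J has_integral integral {-L..L} J) UNIV"
      by (rule L0) (auto intro: continuous_on_subset[OF Jc] J0)
    moreover have "integral {-L..L} J = integral {0..T} (\<lambda>\<tau>. integral {-L..L} (\<lambda>t. H (s'+\<tau>*a) (t+\<tau>*b)))"
      unfolding J_def
      using integral_swap_continuous[of "-L" 0 L T "\<lambda>t \<tau>. H (s'+\<tau>*a) (t+\<tau>*b)"]
            continuous_on_subset[OF Kc]
      by (simp add: cbox_interval)
    moreover have IR: "integral {-L..L} (\<lambda>t. H (s'+\<tau>*a) (t+\<tau>*b)) = R (s'+\<tau>*a)" if "\<tau> \<in> {0..T}" for \<tau>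
    proof -
      have "((\<lambda>t. H (s'+\<tau>*a) (t+\<tau>*b)) has_integral integral {-L..L} (\<lambda>t. H (s'+\<tau>*a) (t+\<tau>*b))) UNIV"
        by (rule L0) (use that in \<open>auto intro!: Z2 Kc2\<close>)
      then show ?thesis using Rshift has_integral_unique by blast
    qed
    moreover have "integral {0..T} (\<lambda>\<tau>. integral {-L..L} (\<lambda>t. H (s'+\<tau>*a) (t+\<tau>*b)))
        = integral {0..T} (\<lambda>\<tau>. R (s'+\<tau>*a))"
      by (rule integral_cong) (rule IR)
    moreover have "(\<lambda>t. integral {0..} (\<lambda>\<tau>. H (s'+\<tau>*a) (t+\<tau>*b))) = J"
      using eq0 J_def by auto
    ultimately show ?thesis by simp
  qed
  define K0 where "K0 = \<bar>s\<bar> + 1 + T * \<bar>a\<bar> + 1"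
  define G where "G x = integral {-K0..x} R" for x
  have RcI: "R integrable_on {p..q}" for p q
    by (rule integrable_continuous_real) (rule continuous_on_subset[OF Rcont], auto)
  have Gd: "(G has_real_derivative R x) (at x)" if x: "\<bar>x\<bar> < K0" for x
  proof -
    have xK: "x \<in> {-K0..K0}" using x by (auto simp: abs_less_iff)
    have "(G has_real_derivative R x) (at x within {-K0..K0})"
      unfolding G_def
      using integral_has_real_derivative[OF continuous_on_subset[OF Rcont] xK] by simp
    moreover have "x \<in> interior {-K0..K0}" using x by auto
    ultimately show ?thesis using at_within_interior by metis
  qed
  define C where "C = (if a > 0 then integral {-K0..r} R else 0)"
  have FG: "F s' = (C - G s') / a" if s': "dist s' s < 1" for s'
  proof -
    have s'b: "\<bar>s'\<bar> < \<bar>s\<bar> + 1" using s' by (simp add: dist_real_def) 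
    have "((\<lambda>\<tau>. R (s'+\<tau>*a)) has_integral ((\<lambda>\<tau>. G (s'+\<tau>*a)/a) T - (\<lambda>\<tau>. G (s'+\<tau>*a)/a) 0)) {0..T}"
    proof (rule fundamental_theorem_of_calculus[of 0 T "\<lambda>\<tau>. G (s'+\<tau>*a)/a" "\<lambda>\<tau>. R (s'+\<tau>*a)"], goal_cases)
      case 1 show "0 \<le> T" using T0 by simp
    next
      case (2 \<tau>)
      then have t: "0 \<le> \<tau>" "\<tau> \<le> T" by auto
      have "\<tau> * \<bar>a\<bar> \<le> T * \<bar>a\<bar>" using t by (simp add: mult_right_mono)
      moreover have "\<bar>\<tau>*a\<bar> = \<tau> * \<bar>a\<bar>" using t by (simp add: abs_mult)
      ultimately have "\<bar>s'+\<tau>*a\<bar> < K0" unfolding K0_def using s'b by linarith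
      from Gd[OF this] have "((\<lambda>\<tau>. G (s'+\<tau>*a)) has_real_derivative R (s'+\<tau>*a) * a) (at \<tau>)"
        by (rule DERIV_chain2) (rule derivative_eq_intros refl | simp)+
      then have "((\<lambda>\<tau>. G (s'+\<tau>*a)/a) has_real_derivative R (s'+\<tau>*a) * a / a) (at \<tau>)"
        by (rule DERIV_cdivide)
      then have "((\<lambda>\<tau>. G (s'+\<tau>*a)/a) has_real_derivative R (s'+\<tau>*a)) (at \<tau>)"
        using a by simp
      then show "((\<lambda>\<tau>. G (s'+\<tau>*a)/a) has_vector_derivative R (s'+\<tau>*a)) (at \<tau> within {0..T})"
        by (simp add: has_real_derivative_iff_has_vector_derivative has_vector_derivative_at_within)
    qed
    moreover have "G (s'+T*a) = C"
    proof (cases "a > 0")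
      case True
      then have "T * a = r + \<bar>s\<bar> + 1" using Ta by simp
      then have x: "r \<le> s'+T*a" using s'b by linarith
      have "G (s'+T*a) = integral {-K0..r} R + integral {r..s'+T*a} R"
      proof -
        have "0 \<le> T * \<bar>a\<bar>" using T0 by simp
        then have "-K0 \<le> r" unfolding K0_def using r by linarith
        from Henstock_Kurzweil_Integration.integral_combine[OF this x RcI] show ?thesis by (simp add: G_def)
      qed
      moreover have "integral {r..s'+T*a} R = integral {r..s'+T*a} (\<lambda>_. 0)"
        by (rule integral_cong) (use r in \<open>auto intro!: Rsupp\<close>)
      ultimately show ?thesis using True C_def by simp
    next
      case False
      then have "T * a = - (r + \<bar>s\<bar> + 1)" using Ta a by simp
      then have x: "s'+T*a \<le> -r" using s'b by linarith
      have "G (s'+T*a) = integral {-K0..s'+T*a} (\<lambda>_. 0)"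
        unfolding G_def
        by (rule integral_cong) (use x r in \<open>auto intro!: Rsupp\<close>)
      then show ?thesis using False C_def by simp
    qed
    ultimately have "integral {0..T} (\<lambda>\<tau>. R (s'+\<tau>*a)) = (C - G s') / a"
      by (simp add: integral_unique diff_divide_distrib)
    then show ?thesis unfolding F_def using key[OF s'] integral_unique by metis
  qed
  have "0 \<le> T * \<bar>a\<bar>" using T0 by simp
  then have "\<bar>s\<bar> < K0" unfolding K0_def by linarith
  from Gd[OF this] have "((\<lambda>s'. C - G s') has_real_derivative (0 - R s)) (at s)"
    by (intro DERIV_diff DERIV_const)
  then have "((\<lambda>s'. (C - G s') / a) has_real_derivative ((0 - R s) / a)) (at s)"
    by (rule DERIV_cdivide)
  then have "((\<lambda>s'. (C - G s') / a) has_real_derivative (- R s / a)) (at s)"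
    by simp
  then have FD: "(F has_real_derivative (- R s / a)) (at s)"
  proof (rule has_field_derivative_transform_within_open[of _ _ _ "ball s 1"])
    show "open (ball s 1)" by simp
    show "s \<in> ball s 1" by simp
    fix x assume "x \<in> ball s 1"
    then have "dist x s < 1" by (simp add: dist_commute)
    from FG[OF this] show "(C - G x) / a = F x" by simp
  qed
  have IU: "integral UNIV (\<lambda>t. H s t) = R s" using RH by (rule integral_unique)
  have eq: "-(1/a) * integral UNIV (\<lambda>t. H s t) = - R s / a" unfolding IU by simp
  show "((\<lambda>s. integral UNIV (\<lambda>t. integral {0..} (\<lambda>\<tau>. H (s+\<tau>*a) (t+\<tau>*b))))
           has_real_derivative (-(1/a) * integral UNIV (\<lambda>t. H s t))) (at s)"
    unfolding eq using FD[unfolded F_def] .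
  show "(\<lambda>t. integral {0..} (\<lambda>\<tau>. H (s+\<tau>*a) (t+\<tau>*b))) integrable_on UNIV"
    using key[of s] unfolding integrable_on_def by auto
qed


lemma inner2: "(x::vec2) \<bullet> y = x$1*y$1 + x$2*y$2"
  by (simp add: inner_vec_def sum_2)

lemma perp_comp [simp]: "perp x $ 1 = - (x$2)" "perp x $ 2 = x$1"
  by (simp_all add: perp_def)

lemma lemA:
  fixes h :: "vec2 \<Rightarrow> real" and psi gam :: vec2 and r s :: real
  assumes hc: "continuous_on UNIV h" and hs: "\<And>x. r \<le> norm x \<Longrightarrow> h x = 0"
    and r: "r > 0" and np: "norm psi = 1" and a: "psi \<bullet> gam \<noteq> 0"
  shows "(\<lambda>t. divbeam gam h (s *\<^sub>R psi + t *\<^sub>R perp psi)) integrable_on UNIV"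
    and "((\<lambda>s. radon (divbeam gam h) psi s) has_real_derivative (-(1/(psi \<bullet> gam)) * radon h psi s)) (at s)"
    and "(\<lambda>t. h (s *\<^sub>R psi + t *\<^sub>R perp psi)) integrable_on UNIV"
proof -
  define H where "H u v = h (u *\<^sub>R psi + v *\<^sub>R perp psi)" for u v
  define b where "b = perp psi \<bullet> gam"
  have pp: "psi$1 * psi$1 + psi$2 * psi$2 = 1"
    using np by (metis inner2 norm_eq_1)
  have npp: "norm (perp psi) = 1"
    using pp by (simp add: norm_eq_1 inner2 algebra_simps)
  have decomp: "gam = (psi \<bullet> gam) *\<^sub>R psi + b *\<^sub>R perp psi"
  proof -
    have "gam$1 = (psi \<bullet> gam) * psi$1 + b * perp psi$1" "gam$2 = (psi \<bullet> gam) * psi$2 + b * perp psi$2"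
      unfolding b_def inner2 perp_comp
      using pp by algebra+
    then show ?thesis by (simp add: vec_eq_iff forall_2)
  qed
  have idt: "(s' + \<tau>*(psi \<bullet> gam)) *\<^sub>R psi + (t+\<tau>*b) *\<^sub>R perp psi = s' *\<^sub>R psi + t *\<^sub>R perp psi + \<tau> *\<^sub>R gam" for s' t \<tau>
  proof -
    have "\<tau> *\<^sub>R gam = \<tau> *\<^sub>R ((psi \<bullet> gam) *\<^sub>R psi + b *\<^sub>R perp psi)"
      using decomp by (rule arg_cong)
    then show ?thesis by (simp add: algebra_simps)
  qed
  have cont: "continuous_on UNIV (\<lambda>(u,v). H u v)"
    unfolding H_def case_prod_beta'
    by (rule continuous_on_compose2[OF hc]) (auto intro!: continuous_intros)
  have supp: "H u v = 0" if "r \<le> \<bar>u\<bar> \<or> r \<le> \<bar>v\<bar>" for u v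
  proof -
    let ?x = "u *\<^sub>R psi + v *\<^sub>R perp psi"
    have "?x \<bullet> psi = u" "?x \<bullet> perp psi = v"
      using pp by (simp_all add: inner2 algebra_simps) (metis distrib_left mult.right_neutral)+
    then have "\<bar>u\<bar> \<le> norm ?x" "\<bar>v\<bar> \<le> norm ?x"
      using Cauchy_Schwarz_ineq2[of ?x psi] Cauchy_Schwarz_ineq2[of ?x "perp psi"] np npp by auto
    then show ?thesis unfolding H_def using that by (intro hs) linarith
  qed
  note B1 = lemB(1)[of H r "psi \<bullet> gam" s b, OF cont supp a r]
  note B2 = lemB(2)[of H r "psi \<bullet> gam" b s, OF cont supp a r]
  note B3 = lemB(3)[of H r "psi \<bullet> gam" s, OF cont supp a r]
  have eqD: "divbeam gam h (s' *\<^sub>R psi + t *\<^sub>R perp psi) = integral {0..} (\<lambda>\<tau>. H (s'+\<tau>*(psi \<bullet> gam)) (t+\<tau>*b))" for s' t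
    unfolding divbeam_def H_def idt ..
  show "(\<lambda>t. divbeam gam h (s *\<^sub>R psi + t *\<^sub>R perp psi)) integrable_on UNIV"
    unfolding eqD using B1 .
  show "(\<lambda>t. h (s *\<^sub>R psi + t *\<^sub>R perp psi)) integrable_on UNIV"
    using B3 unfolding H_def .
  have "radon (divbeam gam h) psi = (\<lambda>s. integral UNIV (\<lambda>t. integral {0..} (\<lambda>\<tau>. H (s+\<tau>*(psi \<bullet> gam)) (t+\<tau>*b))))"
    unfolding radon_def eqD ..
  moreover have "radon h psi s = integral UNIV (\<lambda>t. H s t)" unfolding radon_def H_def ..
  ultimately show "((\<lambda>s. radon (divbeam gam h) psi s) has_real_derivative (-(1/(psi \<bullet> gam)) * radon h psi s)) (at s)"
    using B2 by simp
qed


lemma radon_sum: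
  assumes "finite I" "\<And>i. i \<in> I \<Longrightarrow> (\<lambda>t. D i (s *\<^sub>R psi + t *\<^sub>R perp psi)) integrable_on UNIV"
  shows "radon (\<lambda>x. \<Sum>i\<in>I. c i * D i x) psi s = (\<Sum>i\<in>I. c i * radon (D i) psi s)"
  unfolding radon_def
  by (subst integral_sum) (use assms in \<open>auto intro: integrable_on_mult_right\<close>)

lemma vec2_deriv:
  assumes "(f1 has_real_derivative d1) (at x)" "(f2 has_real_derivative d2) (at x)"
  shows "((\<lambda>t. vector [f1 t, f2 t] :: vec2) has_vector_derivative vector [d1, d2]) (at x)"
proof -
  have e: "(\<lambda>t. vector [f1 t, f2 t] :: vec2) = (\<lambda>t. f1 t *\<^sub>R (vector [1,0] :: vec2) + f2 t *\<^sub>R vector [0,1])"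
    by (auto simp: vec_eq_iff forall_2)
  have "((\<lambda>t. f1 t *\<^sub>R (vector [1,0] :: vec2) + f2 t *\<^sub>R vector [0,1]) has_vector_derivative
      (f1 x *\<^sub>R 0 + d1 *\<^sub>R vector [1,0] + (f2 x *\<^sub>R 0 + d2 *\<^sub>R vector [0,1]))) (at x)"
    by (intro has_vector_derivative_add has_vector_derivative_scaleR assms has_vector_derivative_const)
  moreover have "f1 x *\<^sub>R 0 + d1 *\<^sub>R vector [1,0] + (f2 x *\<^sub>R 0 + d2 *\<^sub>R vector [0,1]) = (vector [d1, d2] :: vec2)"
    by (auto simp: vec_eq_iff forall_2)
  ultimately show ?thesis unfolding e by simp
qed

lemma C2_cont: "C2 h \<Longrightarrow> continuous_on UNIV h"
  unfolding C2_def
  by (metis continuous_at_imp_continuous_on has_derivative_continuous)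

lemma C2c_supp: "C2c (ball 0 r) h \<Longrightarrow> r \<le> norm x \<Longrightarrow> h x = 0"
  unfolding C2c_def using closure_subset by (metis (mono_tags, lifting) dist_0_norm mem_Collect_eq mem_ball not_le subsetD)

theorem theorem7:
  fixes r :: real and f :: "vec2 \<Rightarrow> vec2" and m :: nat
    and g :: "nat \<Rightarrow> vec2" and c :: "nat \<Rightarrow> real" and psi :: vec2 and s :: real
  assumes "r > 0"
    and "C2c (ball 0 r) (\<lambda>x. f x $ 1)" and "C2c (ball 0 r) (\<lambda>x. f x $ 2)"
    and "inj_on g {1..m}"
    and "\<forall>i\<in>{1..m}. norm (g i) = 1"
    and "\<forall>i\<in>{1..m}. c i \<noteq> 0"
    and "norm psi = 1"
    and "psi \<notin> sing_dirs1 m g \<union> sing_dirs2 m c g"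
  shows "\<exists>D. ((\<lambda>t. radonV (star_transform m c g f) psi t) has_vector_derivative D) (at s)
            \<and> Qmat m c g psi *v D = radonV f psi s"
proof -
  note r = assms(1) and np = assms(7)
  have fc1: "continuous_on UNIV (\<lambda>x. f x $ 1)" using C2_cont assms(2) unfolding C2c_def by blast
  have fc2: "continuous_on UNIV (\<lambda>x. f x $ 2)" using C2_cont assms(3) unfolding C2c_def by blast
  have fs: "f x = 0" if "r \<le> norm x" for x
    using C2c_supp[OF assms(2) that] C2c_supp[OF assms(3) that] by (simp add: vec_eq_iff forall_2)
  have hc: "continuous_on UNIV (\<lambda>y. f y \<bullet> v)" for v
    unfolding inner2 by (intro continuous_intros fc1 fc2)
  have hs: "f y \<bullet> v = 0" if "r \<le> norm y" for v y using fs[OF that] by simp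
  have ai: "psi \<bullet> g i \<noteq> 0" if "i \<in> {1..m}" for i
    using assms(8) np that unfolding sing_dirs1_def by auto
  have pp: "psi \<bullet> psi \<noteq> 0" using np by (simp add: norm_eq_1)
  define \<rho> where "\<rho> = radonV f psi s"
  have fck: "continuous_on UNIV (\<lambda>x. f x $ k)" for k
    using exhaust_2[of k] fc1 fc2 by auto
  have fsk: "f x $ k = 0" if "r \<le> norm x" for x k using fs[OF that] by simp
  have int1: "(\<lambda>t. f (s' *\<^sub>R psi + t *\<^sub>R perp psi) $ k) integrable_on UNIV" for s' k
    by (rule lemA(3)[of "\<lambda>x. f x $ k" r psi psi s', OF fck fsk r np pp])
  have rad_inner: "radon (\<lambda>y. f y \<bullet> v) psi s' = radonV f psi s' \<bullet> v" for v s'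
  proof -
    have "radon (\<lambda>y. f y \<bullet> v) psi s' = integral UNIV (\<lambda>t. f (s' *\<^sub>R psi + t *\<^sub>R perp psi) $ 1 * v$1
        + f (s' *\<^sub>R psi + t *\<^sub>R perp psi) $ 2 * v$2)"
      unfolding radon_def inner2 ..
    also have "\<dots> = radon (\<lambda>x. f x $ 1) psi s' * v$1 + radon (\<lambda>x. f x $ 2) psi s' * v$2"
      unfolding radon_def
      by (subst integral_add) (auto intro: integrable_on_mult_left int1)
    finally show ?thesis unfolding radonV_def inner2 by simp
  qed
  define \<Phi>1 where "\<Phi>1 t = (\<Sum>i\<in>{1..m}. c i * radon (divbeam (g i) (\<lambda>y. f y \<bullet> g i)) psi t)" for t
  define \<Phi>2 where "\<Phi>2 t = (\<Sum>i\<in>{1..m}. c i * radon (divbeam (g i) (\<lambda>y. f y \<bullet> perp (g i))) psi t)" for t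
  have stc: "star_transform m c g f x = vector [\<Sum>i\<in>{1..m}. c i * divbeam (g i) (\<lambda>y. f y \<bullet> g i) x,
              \<Sum>i\<in>{1..m}. c i * divbeam (g i) (\<lambda>y. f y \<bullet> perp (g i)) x]" for x
    unfolding star_transform_def divbeamV_def by (simp add: vec_eq_iff forall_2)
  have eqR: "radonV (star_transform m c g f) psi t = vector [\<Phi>1 t, \<Phi>2 t]" for t
  proof -
    have "radon (\<lambda>x. \<Sum>i\<in>{1..m}. c i * divbeam (g i) (\<lambda>y. f y \<bullet> g i) x) psi t = \<Phi>1 t"
      unfolding \<Phi>1_def
      by (rule radon_sum) (auto intro!: lemA(1)[OF hc hs r np] ai)
    moreover have "radon (\<lambda>x. \<Sum>i\<in>{1..m}. c i * divbeam (g i) (\<lambda>y. f y \<bullet> perp (g i)) x) psi t = \<Phi>2 t"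
      unfolding \<Phi>2_def
      by (rule radon_sum) (auto intro!: lemA(1)[OF hc hs r np] ai)
    ultimately show ?thesis unfolding radonV_def stc by (simp add: vec_eq_iff forall_2)
  qed
  define D1 where "D1 = (\<Sum>i\<in>{1..m}. c i * (-(1/(psi \<bullet> g i)) * (\<rho> \<bullet> g i)))"
  define D2 where "D2 = (\<Sum>i\<in>{1..m}. c i * (-(1/(psi \<bullet> g i)) * (\<rho> \<bullet> perp (g i))))"
  have d1: "(\<Phi>1 has_real_derivative D1) (at s)"
    unfolding \<Phi>1_def D1_def \<rho>_def rad_inner[symmetric]
    by (intro DERIV_sum DERIV_cmult lemA(2)[OF hc hs r np] ai) 
  have d2: "(\<Phi>2 has_real_derivative D2) (at s)"
    unfolding \<Phi>2_def D2_def \<rho>_def rad_inner[symmetric]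
    by (intro DERIV_sum DERIV_cmult lemA(2)[OF hc hs r np] ai) 
  have dv: "((\<lambda>t. radonV (star_transform m c g f) psi t) has_vector_derivative vector [D1, D2]) (at s)"
    unfolding eqR by (rule vec2_deriv[OF d1 d2])
  define \<gamma> where "\<gamma> = gamma_psi m c g psi"
  define M where "M = (vector [\<gamma>, perp \<gamma>] :: real^2^2)"
  have \<gamma>0: "\<gamma> \<noteq> 0"
    using assms(8) np unfolding \<gamma>_def sing_dirs2_def by auto
  have \<gamma>c: "\<gamma> $ k = - (\<Sum>i\<in>{1..m}. c i / (psi \<bullet> g i) * g i $ k)" for k
    unfolding \<gamma>_def gamma_psi_def by simp
  have DM: "vector [D1, D2] = M *v \<rho>"
  proof -
    have "\<gamma> \<bullet> \<rho> = (\<Sum>i\<in>{1..m}. -(c i / (psi \<bullet> g i) * g i $ 1) * \<rho>$1 + -(c i / (psi \<bullet> g i) * g i $ 2) * \<rho>$2)"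
      unfolding inner2[of \<gamma> \<rho>] \<gamma>c by (simp add: sum.distrib sum_distrib_right sum_negf sum_subtractf)
    also have "\<dots> = D1"
      unfolding D1_def inner2[of \<rho>]
      by (rule sum.cong) (simp_all add: divide_inverse algebra_simps)
    finally have e1: "D1 = \<gamma> \<bullet> \<rho>" ..
    have "perp \<gamma> \<bullet> \<rho> = (\<Sum>i\<in>{1..m}. (c i / (psi \<bullet> g i) * g i $ 2) * \<rho>$1 + -(c i / (psi \<bullet> g i) * g i $ 1) * \<rho>$2)"
      unfolding inner2[of "perp \<gamma>" \<rho>] perp_comp \<gamma>c by (simp add: sum.distrib sum_distrib_right sum_negf sum_subtractf)
    also have "\<dots> = D2"
      unfolding D2_def inner2[of \<rho>] perp_comp
      by (rule sum.cong) (simp_all add: divide_inverse algebra_simps)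
    finally have e2: "D2 = perp \<gamma> \<bullet> \<rho>" ..
    show ?thesis
      using e1 e2 unfolding M_def by (simp add: vec_eq_iff forall_2 matrix_vector_mult_def sum_2 inner2)
  qed
  have "det M \<noteq> 0"
  proof
    assume "det M = 0"
    then have "\<gamma>$1 * \<gamma>$1 + \<gamma>$2 * \<gamma>$2 = 0" unfolding M_def det_2 by simp
    then have "\<gamma>$1 = 0" "\<gamma>$2 = 0" by (simp_all add: sum_squares_eq_zero_iff)
    then show False using \<gamma>0 by (simp add: vec_eq_iff forall_2)
  qed
  then have inv: "invertible M" by (simp add: invertible_det_nz)
  have QM: "matrix_inv M ** M = mat 1"
    using someI_ex[OF inv[unfolded invertible_def]] unfolding matrix_inv_def by blast
  have "Qmat m c g psi *v vector [D1, D2] = \<rho>"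
    unfolding DM Qmat_def \<gamma>_def[symmetric] M_def[symmetric]
    by (simp add: matrix_vector_mul_assoc QM)
  with dv show ?thesis unfolding \<rho>_def by blast
qed

end
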